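(* Let $H'=\begin{bmatrix}0\\1\\0\end{bmatrix}$, $V'=\begin{bmatrix}0&1&0\end{bmatrix}$, $\mathcal{C}'=Av_{\mathfrak{P}}(H',V')$, and for $n\ge1$ let $c'_n$ be the number of polyominoes in $\mathcal{C}'$ whose minimal bounding rectangle is an $n\times n$ square. Then $c'_n\ge\lfloor n/2\rfloor!$ for all $n\ge1$.
   Context: A polyomino is a finite union of unit cells of $\mathbb{Z}\times\mathbb{Z}$ that is connected via edge adjacency, considered up to translation, identified with the binary matrix of its minimal bounding rectangle (entry $1$ iff the corresponding unit square is a cell). A matrix is a submatrix of another if obtained by deleting rows and/or columns; $Av_{\mathfrak{P}}(\mathcal{M})$ is the set of polyominoes with no submatrix in $\mathcal{M}$. *)

theory Defs
  imports Main
begin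

text \<open>A polyomino is represented by its canonical translate: a finite nonempty set of
cells (row, column) in nat \<times> nat, edge-connected, whose minimal bounding rectangle
has its top-left corner at (0,0). Its binary matrix has entry (i,j) = 1 iff (i,j) is a cell.\<close>

type_synonym cell = "nat \<times> nat"

definition adjacent :: "cell \<Rightarrow> cell \<Rightarrow> bool" where
  "adjacent a b \<longleftrightarrow>
     (fst a = fst b \<and> (snd a = Suc (snd b) \<or> snd b = Suc (snd a))) \<or>
     (snd a = snd b \<and> (fst a = Suc (fst b) \<or> fst b = Suc (fst a)))"

definition is_polyomino :: "cell set \<Rightarrow> bool" where
  "is_polyomino P \<longleftrightarrow> finite P \<and> P \<noteq> {} \<and>
     (\<exists>c\<in>P. fst c = 0) \<and> (\<exists>c\<in>P. snd c = 0) \<and>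
     (\<forall>a\<in>P. \<forall>b\<in>P. (\<lambda>x y. x \<in> P \<and> y \<in> P \<and> adjacent x y)\<^sup>*\<^sup>* a b)"

definition poly_height :: "cell set \<Rightarrow> nat" where
  "poly_height P = Suc (Max (fst ` P))"

definition poly_width :: "cell set \<Rightarrow> nat" where
  "poly_width P = Suc (Max (snd ` P))"

text \<open>A binary matrix: (number of rows, number of columns, entries).\<close>
type_synonym bmatrix = "nat \<times> nat \<times> (nat \<Rightarrow> nat \<Rightarrow> bool)"

definition contains_pattern :: "cell set \<Rightarrow> bmatrix \<Rightarrow> bool" where
  "contains_pattern P M = (case M of (k, l, m) \<Rightarrow>
     (\<exists>r c. strict_mono_on {..<k} r \<and> strict_mono_on {..<l} c \<and>
        (\<forall>i<k. r i < poly_height P) \<and> (\<forall>j<l. c j < poly_width P) \<and>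
        (\<forall>i<k. \<forall>j<l. m i j \<longleftrightarrow> (r i, c j) \<in> P)))"

definition Av_P :: "bmatrix set \<Rightarrow> cell set set" where
  "Av_P Ms = {P. is_polyomino P \<and> (\<forall>M\<in>Ms. \<not> contains_pattern P M)}"

definition H' :: bmatrix where
  "H' = (3, 1, \<lambda>i j. i = 1)"

definition V' :: bmatrix where
  "V' = (1, 3, \<lambda>i j. j = 1)"

definition c' :: "nat \<Rightarrow> nat" where
  "c' n = card {P \<in> Av_P {H', V'}. poly_height P = n \<and> poly_width P = n}"

end

theory Submission
  imports Defs "HOL-Combinatorics.Permutations"
begin

definition Pf :: "nat \<Rightarrow> (nat \<Rightarrow> nat) \<Rightarrow> cell set" where
  "Pf n f = {(i,j). i<n \<and> j<n \<and> \<not>(odd i \<and> j = 2*f(i div 2)+1)}"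

lemma Pf_mem: "(i,j) \<in> Pf n f \<longleftrightarrow> i<n \<and> j<n \<and> \<not>(odd i \<and> j = 2*f(i div 2)+1)"
  by (simp add: Pf_def)

lemma row_path:
  assumes "\<And>j. j < n \<Longrightarrow> (i,j) \<in> P"
  shows "j < n \<Longrightarrow> (\<lambda>x y. x \<in> P \<and> y \<in> P \<and> adjacent x y)\<^sup>*\<^sup>* (i,j) (i,0)"
proof (induction j)
  case 0 then show ?case by simp
next
  case (Suc j)
  have "(\<lambda>x y. x \<in> P \<and> y \<in> P \<and> adjacent x y) (i, Suc j) (i,j)"
    using assms Suc.prems by (auto simp: adjacent_def)
  note st = this
  show ?case by (rule converse_rtranclp_into_rtranclp[OF st Suc.IH[OF Suc_lessD[OF Suc.prems]]])
qed

lemma col_path: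
  assumes "\<And>i. i < n \<Longrightarrow> (i,0) \<in> P"
  shows "i < n \<Longrightarrow> (\<lambda>x y. x \<in> P \<and> y \<in> P \<and> adjacent x y)\<^sup>*\<^sup>* (i,0) (0,0)"
proof (induction i)
  case 0 then show ?case by simp
next
  case (Suc i)
  have "(\<lambda>x y. x \<in> P \<and> y \<in> P \<and> adjacent x y) (Suc i, 0) (i,0)"
    using assms Suc.prems by (auto simp: adjacent_def)
  note st = this
  show ?case by (rule converse_rtranclp_into_rtranclp[OF st Suc.IH[OF Suc_lessD[OF Suc.prems]]])
qed

lemma Pf_in:
  assumes f: "f permutes {..<n div 2}" and n: "n \<ge> 1"
  shows "Pf n f \<in> Av_P {H', V'} \<and> poly_height (Pf n f) = n \<and> poly_width (Pf n f) = n"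
proof -
  let ?P = "Pf n f"
  let ?R = "\<lambda>x y. x \<in> ?P \<and> y \<in> ?P \<and> adjacent x y"
  have fin: "finite ?P"
    by (rule finite_subset[of _ "{..<n} \<times> {..<n}"]) (auto simp: Pf_def)
  have sub: "\<And>a. a \<in> ?P \<Longrightarrow> fst a < n \<and> snd a < n" by (auto simp: Pf_def)
  have c0: "\<And>i. i < n \<Longrightarrow> (i,0) \<in> ?P" by (simp add: Pf_mem)
  have r0: "\<And>j. j < n \<Longrightarrow> (0,j) \<in> ?P" by (simp add: Pf_mem)
  have reach: "?R\<^sup>*\<^sup>* a (0,0)" if a: "a \<in> ?P" for a
  proof -
    obtain i j where ij: "a = (i,j)" by force
    have i: "i < n" "j < n" using a ij by (auto simp: Pf_def)
    have even_case: "?R\<^sup>*\<^sup>* (k,j) (0,0)" if "even k" "k < n" for k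
    proof -
      have "\<And>j. j < n \<Longrightarrow> (k,j) \<in> ?P" using that by (simp add: Pf_mem)
      hence "?R\<^sup>*\<^sup>* (k,j) (k,0)" using row_path i(2) by blast
      moreover have "?R\<^sup>*\<^sup>* (k,0) (0,0)" using col_path c0 that(2) by blast
      ultimately show ?thesis by (rule rtranclp_trans)
    qed
    show ?thesis
    proof (cases "even i")
      case True then show ?thesis using ij i even_case by simp
    next
      case False
      then obtain k where k: "i = Suc k" by (cases i) auto
      have "even k" using False k by simp
      have "(k,j) \<in> ?P" using \<open>even k\<close> k i by (simp add: Pf_mem)
      hence "?R a (k,j)" using a ij k by (auto simp: adjacent_def)
      moreover have "?R\<^sup>*\<^sup>* (k,j) (0,0)" using even_case \<open>even k\<close> k i by simp
      ultimately show ?thesis by (rule converse_rtranclp_into_rtranclp)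
    qed
  qed
  have symR: "symp ?R" by (auto simp: symp_def adjacent_def)
  have conn: "\<forall>a\<in>?P. \<forall>b\<in>?P. ?R\<^sup>*\<^sup>* a b"
  proof (intro ballI)
    fix a b assume "a \<in> ?P" "b \<in> ?P"
    have "?R\<^sup>*\<^sup>* b (0,0)" using reach \<open>b \<in> ?P\<close> by blast
    hence "?R\<^sup>*\<^sup>* (0,0) b" using sympD[OF symp_rtranclp[OF symR]] by blast
    thus "?R\<^sup>*\<^sup>* a b" by (rule rtranclp_trans[OF reach[OF \<open>a \<in> ?P\<close>]])
  qed
  have n0: "(0,0) \<in> ?P" using n c0 by simp
  have poly: "is_polyomino ?P"
    unfolding is_polyomino_def using fin n0 conn by (auto intro!: bexI[of _ "(0,0)"])
  have "Max (fst ` ?P) = n - 1"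
  proof (rule Max_eqI)
    show "finite (fst ` ?P)" using fin by simp
    show "\<And>y. y \<in> fst ` ?P \<Longrightarrow> y \<le> n - 1" using sub by fastforce
    show "n - 1 \<in> fst ` ?P" using c0[of "n-1"] n by (force intro: image_eqI[of _ _ "(n-1,0)"])
  qed
  hence h: "poly_height ?P = n" using n by (simp add: poly_height_def)
  have "Max (snd ` ?P) = n - 1"
  proof (rule Max_eqI)
    show "finite (snd ` ?P)" using fin by simp
    show "\<And>y. y \<in> snd ` ?P \<Longrightarrow> y \<le> n - 1" using sub by fastforce
    show "n - 1 \<in> snd ` ?P" using r0[of "n-1"] n by (force intro: image_eqI[of _ _ "(0,n-1)"])
  qed
  hence w: "poly_width ?P = n" using n by (simp add: poly_width_def)
  have inj: "inj f" using f permutes_inj by blast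
  have noH: "\<not> contains_pattern ?P H'"
  proof
    assume "contains_pattern ?P H'"
    then obtain r c where sm: "strict_mono_on {..<3::nat} r"
      and rb: "\<forall>i<3. r i < n" and cb: "c 0 < n"
      and m: "\<forall>i<3. (i = 1) \<longleftrightarrow> (r i, c 0) \<in> ?P"
      unfolding contains_pattern_def H'_def h w by auto
    have "r 0 < r 2" using sm by (auto simp: strict_mono_on_def)
    have a: "(r 0, c 0) \<notin> ?P" "(r 2, c 0) \<notin> ?P" using m[rule_format, of 0] m[rule_format, of 2] by auto
    hence "odd (r 0)" "c 0 = 2 * f (r 0 div 2) + 1" "odd (r 2)" "c 0 = 2 * f (r 2 div 2) + 1"
      using rb cb by (auto simp: Pf_mem)
    hence "f (r 0 div 2) = f (r 2 div 2)" by simp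
    hence "r 0 div 2 = r 2 div 2" using inj by (simp add: inj_eq)
    hence "r 0 = r 2" using \<open>odd (r 0)\<close> \<open>odd (r 2)\<close>
      by (metis odd_two_times_div_two_succ)
    thus False using \<open>r 0 < r 2\<close> by simp
  qed
  have noV: "\<not> contains_pattern ?P V'"
  proof
    assume "contains_pattern ?P V'"
    then obtain r c where sm: "strict_mono_on {..<3::nat} c"
      and rb: "r 0 < n" and cb: "\<forall>j<3. c j < n"
      and m: "\<forall>j<3. (j = 1) \<longleftrightarrow> (r 0, c j) \<in> ?P"
      unfolding contains_pattern_def V'_def h w by auto
    have "c 0 < c 2" using sm by (auto simp: strict_mono_on_def)
    have a: "(r 0, c 0) \<notin> ?P" "(r 0, c 2) \<notin> ?P" using m[rule_format, of 0] m[rule_format, of 2] by auto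
    hence "c 0 = c 2" using rb cb by (auto simp: Pf_mem)
    thus False using \<open>c 0 < c 2\<close> by simp
  qed
  show ?thesis using poly noH noV h w by (simp add: Av_P_def)
qed

lemma Pf_inj:
  assumes f: "f permutes {..<n div 2}" and g: "g permutes {..<n div 2}"
    and eq: "Pf n f = Pf n g"
  shows "f = g"
proof
  fix k
  show "f k = g k"
  proof (cases "k < n div 2")
    case True
    have fk: "f k < n div 2" using f True permutes_in_image[OF f] by simp
    have "(2*k+1, 2*f k+1) \<notin> Pf n f" by (simp add: Pf_mem)
    hence "(2*k+1, 2*f k+1) \<notin> Pf n g" using eq by simp
    moreover have "2*k+1 < n" "2*f k+1 < n" using True fk by linarith+
    ultimately show ?thesis by (simp add: Pf_mem)
  next
    case False
    then show ?thesis using permutes_not_in[OF f] permutes_not_in[OF g] by simp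
  qed
qed

theorem proposition19:
  fixes n :: nat
  assumes "n \<ge> 1"
  shows "fact (n div 2) \<le> c' n"
proof -
  let ?S = "{p. p permutes {..<n div 2}}"
  let ?T = "{P \<in> Av_P {H', V'}. poly_height P = n \<and> poly_width P = n}"
  have "card ?S = fact (n div 2)" by (simp add: card_permutations)
  moreover have "card (Pf n ` ?S) = card ?S"
    by (rule card_image) (auto intro: inj_onI Pf_inj)
  moreover have "card (Pf n ` ?S) \<le> card ?T"
  proof (rule card_mono)
    have "?T \<subseteq> Pow ({..<n} \<times> {..<n})"
    proof
      fix P assume P: "P \<in> ?T"
      hence fin: "finite P" by (simp add: Av_P_def is_polyomino_def)
      have "\<forall>a\<in>P. fst a < n \<and> snd a < n"
      proof
        fix a assume "a \<in> P"
        hence "fst a \<le> Max (fst ` P)" "snd a \<le> Max (snd ` P)" using fin by auto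
        thus "fst a < n \<and> snd a < n" using P by (auto simp: poly_height_def poly_width_def)
      qed
      thus "P \<in> Pow ({..<n} \<times> {..<n})" by auto
    qed
    thus "finite ?T" by (rule finite_subset) simp
    show "Pf n ` ?S \<subseteq> ?T" using Pf_in assms by blast
  qed
  ultimately show ?thesis by (simp add: c'_def)
qed

end
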